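(* Let $G$ be a graph with a type-2A 1-planar drawing $D$, and let $S$ be a vertex-cut of $G$. Then: (i) for any two distinct components $F$ and $F'$ of $G-S$, if $ab\in E(F)$ and $cd$ is an edge with one endvertex in $S$ and the other in $V(F')$, then $ab$ and $cd$ do not cross in $D$; and (ii) any two edges belonging to distinct components of $G-S$ do not cross each other in $D$.
   Context: All drawings are good (no edge crosses itself, two edges cross at most once, adjacent edges do not cross). A drawing is 1-planar if every edge is crossed at most once. If edges $ab$ and $cd$ cross in a 1-planar drawing of $G$, the associated edges of this crossing are the edges of $G[\{a,b,c,d\}]$ other than $ab$ and $cd$. A 1-planar drawing is type-2A if every crossing has at least two associated edges, and every crossing with exactly two associated edges has these two edges disjoint. A vertex-cut is a set $S\subseteq V(G)$ with $G-S$ disconnected. *)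

theory Defs
  imports "HOL-Analysis.Analysis"
begin

definition simple_graph :: "'v set \<Rightarrow> 'v set set \<Rightarrow> bool" where
  "simple_graph V E \<longleftrightarrow> finite V \<and>
     (\<forall>e\<in>E. \<exists>u v. u \<noteq> v \<and> e = {u, v} \<and> u \<in> V \<and> v \<in> V)"

definition drawing :: "'v set \<Rightarrow> 'v set set \<Rightarrow> ('v \<Rightarrow> complex) \<Rightarrow> ('v set \<Rightarrow> real \<Rightarrow> complex) \<Rightarrow> bool" where
  "drawing V E pos crv \<longleftrightarrow> inj_on pos V \<and>
     (\<forall>e\<in>E. arc (crv e) \<and> {pathstart (crv e), pathfinish (crv e)} = pos ` e \<and>
             path_image (crv e) \<inter> pos ` V = pos ` e)"

definition inner_pts :: "('v set \<Rightarrow> real \<Rightarrow> complex) \<Rightarrow> 'v set \<Rightarrow> complex set" where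
  "inner_pts crv e = path_image (crv e) - {pathstart (crv e), pathfinish (crv e)}"

definition crosses :: "'v set set \<Rightarrow> ('v set \<Rightarrow> real \<Rightarrow> complex) \<Rightarrow> 'v set \<Rightarrow> 'v set \<Rightarrow> bool" where
  "crosses E crv e f \<longleftrightarrow> e \<in> E \<and> f \<in> E \<and> e \<noteq> f \<and> inner_pts crv e \<inter> inner_pts crv f \<noteq> {}"

definition good_drawing :: "'v set \<Rightarrow> 'v set set \<Rightarrow> ('v \<Rightarrow> complex) \<Rightarrow> ('v set \<Rightarrow> real \<Rightarrow> complex) \<Rightarrow> bool" where
  "good_drawing V E pos crv \<longleftrightarrow> drawing V E pos crv \<and>
     (\<forall>e\<in>E. \<forall>f\<in>E. e \<noteq> f \<longrightarrow>
        finite (inner_pts crv e \<inter> inner_pts crv f) \<and>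
        card (inner_pts crv e \<inter> inner_pts crv f) \<le> 1 \<and>
        (e \<inter> f \<noteq> {} \<longrightarrow> inner_pts crv e \<inter> inner_pts crv f = {}))"

text \<open>1-planar: every edge is crossed at most once (in a good drawing each crossing
  edge contributes exactly one crossing).\<close>
definition one_planar :: "'v set set \<Rightarrow> ('v set \<Rightarrow> real \<Rightarrow> complex) \<Rightarrow> bool" where
  "one_planar E crv \<longleftrightarrow> (\<forall>e\<in>E. finite {f. crosses E crv e f} \<and> card {f. crosses E crv e f} \<le> 1)"

definition assoc_edges :: "'v set set \<Rightarrow> 'v \<Rightarrow> 'v \<Rightarrow> 'v \<Rightarrow> 'v \<Rightarrow> 'v set set" where
  "assoc_edges E a b c d = {e \<in> E. e \<subseteq> {a, b, c, d} \<and> e \<noteq> {a, b} \<and> e \<noteq> {c, d}}"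

definition type_2A :: "'v set set \<Rightarrow> ('v set \<Rightarrow> real \<Rightarrow> complex) \<Rightarrow> bool" where
  "type_2A E crv \<longleftrightarrow> one_planar E crv \<and>
     (\<forall>a b c d. crosses E crv {a, b} {c, d} \<longrightarrow>
        card (assoc_edges E a b c d) \<ge> 2 \<and>
        (card (assoc_edges E a b c d) = 2 \<longrightarrow>
           (\<forall>e\<in>assoc_edges E a b c d. \<forall>e'\<in>assoc_edges E a b c d. e \<noteq> e' \<longrightarrow> e \<inter> e' = {})))"

definition adj_minus :: "'v set \<Rightarrow> 'v set set \<Rightarrow> 'v set \<Rightarrow> ('v \<times> 'v) set" where
  "adj_minus V E S = {(x, y). {x, y} \<in> E \<and> x \<in> V - S \<and> y \<in> V - S}"

definition component_minus :: "'v set \<Rightarrow> 'v set set \<Rightarrow> 'v set \<Rightarrow> 'v set \<Rightarrow> bool" where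
  "component_minus V E S C \<longleftrightarrow> (\<exists>u \<in> V - S. C = {v. (u, v) \<in> (adj_minus V E S)\<^sup>*})"

definition vertex_cut :: "'v set \<Rightarrow> 'v set set \<Rightarrow> 'v set \<Rightarrow> bool" where
  "vertex_cut V E S \<longleftrightarrow> S \<subseteq> V \<and>
     (\<exists>C1 C2. component_minus V E S C1 \<and> component_minus V E S C2 \<and> C1 \<noteq> C2)"

end

theory Submission
  imports Defs
begin

lemma comp_sub:
  assumes "component_minus V E S C" shows "C \<subseteq> V - S"
proof
  fix x assume x: "x \<in> C"
  from assms obtain u where u: "u \<in> V - S" and C: "C = {v. (u, v) \<in> (adj_minus V E S)\<^sup>*}"
    unfolding component_minus_def by blast
  from x C have "(u, x) \<in> (adj_minus V E S)\<^sup>*" by blast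
  then show "x \<in> V - S"
  proof (cases rule: rtrancl.cases)
    case rtrancl_refl then show ?thesis using u by simp
  next
    case (rtrancl_into_rtrancl b) then show ?thesis by (auto simp: adj_minus_def)
  qed
qed

lemma sym_adj: "sym (adj_minus V E S)"
proof (rule symI)
  fix x y assume "(x, y) \<in> adj_minus V E S"
  then show "(y, x) \<in> adj_minus V E S" by (simp add: adj_minus_def insert_commute)
qed

lemma comp_eq:
  assumes "component_minus V E S C" "component_minus V E S C'" "x \<in> C" "x \<in> C'"
  shows "C = C'"
proof -
  let ?R = "adj_minus V E S"
  from assms(1) obtain u where C: "C = {v. (u, v) \<in> ?R\<^sup>*}"
    unfolding component_minus_def by blast
  from assms(2) obtain u' where C': "C' = {v. (u', v) \<in> ?R\<^sup>*}"
    unfolding component_minus_def by blast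
  have s: "sym (?R\<^sup>*)" using sym_adj sym_rtrancl by blast
  have 1: "(u, x) \<in> ?R\<^sup>*" using assms(3) C by simp
  have 2: "(u', x) \<in> ?R\<^sup>*" using assms(4) C' by simp
  have 3: "(x, u') \<in> ?R\<^sup>*" using s 2 by (rule symD)
  have 4: "(x, u) \<in> ?R\<^sup>*" using s 1 by (rule symD)
  have uu: "(u, u') \<in> ?R\<^sup>*" using 1 3 by (rule rtrancl_trans)
  have uu': "(u', u) \<in> ?R\<^sup>*" using 2 4 by (rule rtrancl_trans)
  show ?thesis unfolding C C'
  proof (intro equalityI subsetI)
    fix z assume "z \<in> {v. (u, v) \<in> ?R\<^sup>*}"
    then show "z \<in> {v. (u', v) \<in> ?R\<^sup>*}" using uu' by (simp add: rtrancl_trans)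
  next
    fix z assume "z \<in> {v. (u', v) \<in> ?R\<^sup>*}"
    then show "z \<in> {v. (u, v) \<in> ?R\<^sup>*}" using uu by (simp add: rtrancl_trans)
  qed
qed

lemma no_edge:
  assumes "component_minus V E S F" "component_minus V E S F'" "F \<noteq> F'"
    "x \<in> F" "y \<in> F'" "{x, y} \<in> E"
  shows False
proof -
  let ?R = "adj_minus V E S"
  from assms(1) obtain u where F: "F = {v. (u, v) \<in> ?R\<^sup>*}"
    unfolding component_minus_def by blast
  have "x \<in> V - S" using comp_sub[OF assms(1)] assms(4) by blast
  moreover have "y \<in> V - S" using comp_sub[OF assms(2)] assms(5) by blast
  ultimately have "(x, y) \<in> ?R" using assms(6) by (simp add: adj_minus_def)
  moreover have "(u, x) \<in> ?R\<^sup>*" using assms(4) F by simp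
  ultimately have "(u, y) \<in> ?R\<^sup>*" by simp
  then have "y \<in> F" using F by simp
  then have "F = F'" using comp_eq[OF assms(1) assms(2) _ assms(5)] by blast
  then show False using assms(3) by blast
qed

theorem lemma7:
  fixes V :: "'v set" and E :: "'v set set"
    and pos :: "'v \<Rightarrow> complex" and crv :: "'v set \<Rightarrow> real \<Rightarrow> complex"
  assumes "simple_graph V E"
    and "good_drawing V E pos crv"
    and "type_2A E crv"
    and "vertex_cut V E S"
    and "component_minus V E S F" and "component_minus V E S F'" and "F \<noteq> F'"
  shows "(\<forall>a b c d. {a, b} \<in> E \<and> a \<in> F \<and> b \<in> F \<and> {c, d} \<in> E \<and> c \<in> S \<and> d \<in> F'
            \<longrightarrow> \<not> crosses E crv {a, b} {c, d})
       \<and> (\<forall>e f. e \<in> E \<and> e \<subseteq> F \<and> f \<in> E \<and> f \<subseteq> F' \<longrightarrow> \<not> crosses E crv e f)"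
proof (intro conjI allI impI notI)
  have ne: "\<And>x y. x \<in> F \<Longrightarrow> y \<in> F' \<Longrightarrow> {x, y} \<in> E \<Longrightarrow> False"
    using no_edge[OF assms(5) assms(6) assms(7)] by blast
  have ne': "\<And>x y. x \<in> F \<Longrightarrow> y \<in> F' \<Longrightarrow> {y, x} \<in> E \<Longrightarrow> False"
    using ne by (simp add: insert_commute)
  have edge: "\<And>e. e \<in> E \<Longrightarrow> \<exists>u v. u \<noteq> v \<and> e = {u, v}"
    using assms(1) unfolding simple_graph_def by blast
  have T: "\<forall>a b c d. crosses E crv {a, b} {c, d} \<longrightarrow>
        card (assoc_edges E a b c d) \<ge> 2 \<and>
        (card (assoc_edges E a b c d) = 2 \<longrightarrow>
           (\<forall>e\<in>assoc_edges E a b c d. \<forall>e'\<in>assoc_edges E a b c d. e \<noteq> e' \<longrightarrow> e \<inter> e' = {}))"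
    using assms(3) unfolding type_2A_def by (rule conjunct2)
  fix a b c d
  assume h: "{a, b} \<in> E \<and> a \<in> F \<and> b \<in> F \<and> {c, d} \<in> E \<and> c \<in> S \<and> d \<in> F'"
    and cr: "crosses E crv {a, b} {c, d}"
  have t: "card (assoc_edges E a b c d) \<ge> 2 \<and>
        (card (assoc_edges E a b c d) = 2 \<longrightarrow>
           (\<forall>e\<in>assoc_edges E a b c d. \<forall>e'\<in>assoc_edges E a b c d. e \<noteq> e' \<longrightarrow> e \<inter> e' = {}))"
    using T[rule_format, OF cr] .
  have ab: "a \<noteq> b"
  proof
    assume "a = b"
    obtain u v where "u \<noteq> v" "{a, b} = {u, v}" using edge h by blast
    then show False using \<open>a = b\<close> by (auto simp: doubleton_eq_iff)
  qed
  have inF: "a \<in> F" "b \<in> F" "d \<in> F'" using h by simp_all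
  have x: "{a, d} \<notin> E" "{d, a} \<notin> E" "{b, d} \<notin> E" "{d, b} \<notin> E"
    using ne[OF inF(1) inF(3)] ne'[OF inF(1) inF(3)] ne[OF inF(2) inF(3)] ne'[OF inF(2) inF(3)] by blast+
  have sub: "assoc_edges E a b c d \<subseteq> {{a, c}, {b, c}}"
  proof
    fix e assume e: "e \<in> assoc_edges E a b c d"
    then have eE: "e \<in> E" and es: "e \<subseteq> {a, b, c, d}" and n1: "e \<noteq> {a, b}" and n2: "e \<noteq> {c, d}"
      unfolding assoc_edges_def by auto
    obtain u v where uv: "u \<noteq> v" "e = {u, v}" using edge eE by blast
    have "u = a \<or> u = b \<or> u = c \<or> u = d" "v = a \<or> v = b \<or> v = c \<or> v = d"
      using es uv by auto
    then show "e \<in> {{a, c}, {b, c}}"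
      using uv n1 n2 eE x by (elim disjE) (simp_all add: insert_commute)
  qed
  have c2: "card {{a, c}, {b, c}} \<le> 2" by (simp add: card_insert_le_m1)
  have fin: "finite {{a, c}, {b, c}}" by simp
  have c2': "card {{a, c}, {b, c}} \<le> card (assoc_edges E a b c d)" using c2 t by linarith
  have eq: "assoc_edges E a b c d = {{a, c}, {b, c}}"
    using card_seteq[OF fin sub c2'] .
  have ne2: "{a, c} \<noteq> {b, c}" using ab by (auto simp: doubleton_eq_iff)
  have c2e: "card (assoc_edges E a b c d) = 2" using eq ne2 by simp
  have D: "\<forall>e\<in>assoc_edges E a b c d. \<forall>e'\<in>assoc_edges E a b c d. e \<noteq> e' \<longrightarrow> e \<inter> e' = {}"
    by (rule mp[OF conjunct2[OF t] c2e])
  have m1: "{a, c} \<in> assoc_edges E a b c d" and m2: "{b, c} \<in> assoc_edges E a b c d"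
    unfolding eq by simp_all
  have "{a, c} \<inter> {b, c} = {}" using bspec[OF bspec[OF D m1] m2] ne2 by simp
  then show False by blast
next
  have ne: "\<And>x y. x \<in> F \<Longrightarrow> y \<in> F' \<Longrightarrow> {x, y} \<in> E \<Longrightarrow> False"
    using no_edge[OF assms(5) assms(6) assms(7)] by blast
  have ne': "\<And>x y. x \<in> F \<Longrightarrow> y \<in> F' \<Longrightarrow> {y, x} \<in> E \<Longrightarrow> False"
    using ne by (simp add: insert_commute)
  have edge: "\<And>e. e \<in> E \<Longrightarrow> \<exists>u v. u \<noteq> v \<and> e = {u, v}"
    using assms(1) unfolding simple_graph_def by blast
  have T: "\<forall>a b c d. crosses E crv {a, b} {c, d} \<longrightarrow>
        card (assoc_edges E a b c d) \<ge> 2 \<and>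
        (card (assoc_edges E a b c d) = 2 \<longrightarrow>
           (\<forall>e\<in>assoc_edges E a b c d. \<forall>e'\<in>assoc_edges E a b c d. e \<noteq> e' \<longrightarrow> e \<inter> e' = {}))"
    using assms(3) unfolding type_2A_def by (rule conjunct2)
  fix e f
  assume h: "e \<in> E \<and> e \<subseteq> F \<and> f \<in> E \<and> f \<subseteq> F'" and cr: "crosses E crv e f"
  have hE: "e \<in> E" "f \<in> E" using h by simp_all
  obtain a b where ab: "a \<noteq> b" "e = {a, b}" using edge[OF hE(1)] by blast
  obtain c d where cd: "c \<noteq> d" "f = {c, d}" using edge[OF hE(2)] by blast
  have cr': "crosses E crv {a, b} {c, d}" using cr ab cd by simp
  have t: "card (assoc_edges E a b c d) \<ge> 2"
    using conjunct1[OF T[rule_format, OF cr']] .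
  have inF: "a \<in> F" "b \<in> F" "c \<in> F'" "d \<in> F'" using h ab cd by auto
  have x: "{a, d} \<notin> E" "{d, a} \<notin> E" "{b, d} \<notin> E" "{d, b} \<notin> E"
      "{a, c} \<notin> E" "{c, a} \<notin> E" "{b, c} \<notin> E" "{c, b} \<notin> E"
    using ne[of a d] ne'[of a d] ne[of b d] ne'[of b d]
      ne[of a c] ne'[of a c] ne[of b c] ne'[of b c] inF by blast+
  have "assoc_edges E a b c d = {}"
  proof (rule ccontr)
    assume "assoc_edges E a b c d \<noteq> {}"
    then obtain g where g: "g \<in> assoc_edges E a b c d" by blast
    then have eE: "g \<in> E" and es: "g \<subseteq> {a, b, c, d}" and n1: "g \<noteq> {a, b}" and n2: "g \<noteq> {c, d}"
      unfolding assoc_edges_def by auto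
    obtain u v where uv: "u \<noteq> v" "g = {u, v}" using edge eE by blast
    have "u = a \<or> u = b \<or> u = c \<or> u = d" "v = a \<or> v = b \<or> v = c \<or> v = d"
      using es uv by auto
    then show False
      using uv n1 n2 eE x by (elim disjE) (simp_all add: insert_commute)
  qed
  then show False using t by simp
qed

end
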